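(* For integers $m\ge1$, $n\ge2$, $$\sum_{k=1}^{n-1}\cot^{2m}\frac{k\pi}{n}=(-1)^m(n-1)-\frac{1}{(2m-1)!}\sum_{k=1}^m(-1)^kA_{2m}^{(2k)}\frac{4^kB_{2k}}{2k}\,(n^{2k}-1).$$
   Context: The arctangent numbers $A_m^{(k)}$ are defined by $\frac{(\arctan z)^k}{k!}=\sum_{m\ge k}\frac{A_m^{(k)}}{m!}z^m$. $B_j$ are the Bernoulli numbers, $\frac{z}{e^z-1}=\sum_{j\ge0}\frac{B_j}{j!}z^j$ (so $B_2=1/6$). *)

theory Defs
  imports "HOL-Analysis.Analysis" "HOL-Computational_Algebra.Formal_Power_Series"
begin

text \<open>Arctangent numbers: (arctan z)^k / k! = sum_{m} A m k / m! z^m, i.e.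
  A m k is m! times the m-th Taylor coefficient at 0, which is the m-th derivative at 0.\<close>
definition arctan_num :: "nat \<Rightarrow> nat \<Rightarrow> real" where
  "arctan_num m k = (deriv ^^ m) (\<lambda>x::real. arctan x ^ k / fact k) 0"

text \<open>Bernoulli numbers via z/(e^z - 1) = sum_j B_j / j! z^j (so B_1 = -1/2).\<close>
definition bernoulli_num :: "nat \<Rightarrow> real" where
  "bernoulli_num j = fact j * fps_nth (fps_X / (fps_exp 1 - 1)) j"

end

theory Submission
  imports Defs
begin


definition Tr :: "real fps" where
  "Tr = Abs_fps (\<lambda>j. if odd j then (-1)^(j div 2) / of_nat j else 0)"

lemma fps_nth_conv_deriv_real:
  fixes f :: "real fps"
  assumes "fps_conv_radius f > 0"
  shows   "fps_nth f n = (deriv ^^ n) (eval_fps f) 0 / fact n"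
  using assms
proof (induction n arbitrary: f)
  case 0
  thus ?case by (simp add: eval_fps_def)
next
  case (Suc n f)
  have "(deriv ^^ Suc n) (eval_fps f) 0 = (deriv ^^ n) (deriv (eval_fps f)) 0"
    unfolding funpow_Suc_right o_def ..
  also have "eventually (\<lambda>z::real. z \<in> eball 0 (fps_conv_radius f)) (nhds 0)"
    using Suc.prems by (intro eventually_nhds_in_open) (auto simp: zero_ereal_def)
  hence "eventually (\<lambda>z. deriv (eval_fps f) z = eval_fps (fps_deriv f) z) (nhds 0)"
    by eventually_elim (simp add: eval_fps_deriv)
  hence "(deriv ^^ n) (deriv (eval_fps f)) 0 = (deriv ^^ n) (eval_fps (fps_deriv f)) 0"
    by (intro higher_deriv_cong_ev refl)
  also have "\<dots> / fact n = fps_nth (fps_deriv f) n"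
    using Suc.prems fps_conv_radius_deriv[of f] 
    by (intro Suc.IH [symmetric]) auto
  also have "\<dots> / of_nat (Suc n) = fps_nth f (Suc n)"
    by (simp add: fps_deriv_def del: of_nat_Suc)
  finally show ?case by (simp add: field_split_simps)
qed

lemma fps_nth_fps_expansion_real:
  fixes f :: "real \<Rightarrow> real"
  assumes "f has_fps_expansion F"
  shows   "fps_nth F n = (deriv ^^ n) f 0 / fact n"
proof -
  have "fps_nth F n = (deriv ^^ n) (eval_fps F) 0 / fact n"
    using assms by (intro fps_nth_conv_deriv_real) (auto simp: has_fps_expansion_def)
  also have "(deriv ^^ n) (eval_fps F) 0 = (deriv ^^ n) f 0"
    using assms by (intro higher_deriv_cong_ev) (auto simp: has_fps_expansion_def)
  finally show ?thesis .
qed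

lemma arctan_has_fps: "arctan has_fps_expansion Tr"
proof (rule has_fps_expansionI)
  have "eventually (\<lambda>u::real. u \<in> ball 0 1) (nhds 0)"
    by (intro eventually_nhds_in_open) auto
  then show "\<forall>\<^sub>F u in nhds 0. (\<lambda>n. fps_nth Tr n * u ^ n) sums arctan u"
  proof eventually_elim
    case (elim u)
    then have u: "\<bar>u\<bar> \<le> 1" by simp
    have "(\<lambda>k. (-1)^k * (1 / real (k*2+1) * u ^ (k*2+1))) sums arctan u"
      using summable_arctan_series[OF u] arctan_series[OF u] by (simp add: sums_iff)
    from sums_if'[OF this]
    show ?case
    proof (rule sums_cong[THEN iffD1, rotated])
      fix n :: nat
      show "(if even n then 0 else (- 1) ^ ((n - 1) div 2) * (1 / real ((n - 1) div 2 * 2 + 1) * u ^ ((n - 1) div 2 * 2 + 1))) =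
        fps_nth Tr n * u ^ n"
      proof (cases "even n")
        case False
        then obtain k where "n = 2*k+1" by (metis oddE)
        then show ?thesis by (simp add: Tr_def mult.commute)
      qed (simp add: Tr_def)
    qed
  qed
qed

lemma arctan_pow_has_fps: "(\<lambda>x. arctan x ^ k) has_fps_expansion Tr ^ k"
proof (induction k)
  case (Suc k)
  show ?case using has_fps_expansion_mult[OF arctan_has_fps Suc] by simp
qed simp

lemma arctan_num_fps: "arctan_num m k = fact m / fact k * fps_nth (Tr ^ k) m"
proof -
  have "(\<lambda>x. arctan x ^ k / fact k) has_fps_expansion (Tr ^ k * fps_const (1 / fact k))"
  proof -
    have "(\<lambda>x. arctan x ^ k * (1 / fact k)) has_fps_expansion (Tr ^ k * fps_const (1 / fact k))"
      by (intro fps_expansion_intros arctan_pow_has_fps)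
    then show ?thesis by simp
  qed
  from fps_nth_fps_expansion_real[OF this, of m]
  show ?thesis unfolding arctan_num_def
    by (simp add: field_simps)
qed


lemma cot_inj:
  assumes "n \<ge> 2" "j \<in> {1..n-1}" "k \<in> {1..n-1}"
    and eq: "cot (real j * pi / real n) = cot (real k * pi / real n)"
  shows "j = k"
proof (rule ccontr)
  assume ne: "j \<noteq> k"
  define a where "a = real j * pi / real n"
  define b where "b = real k * pi / real n"
  have n0: "real n > 0" using assms by simp
  have a0: "0 < a" "a < pi" using assms n0 by (auto simp: a_def field_simps)
  have b0: "0 < b" "b < pi" using assms n0 by (auto simp: b_def field_simps)
  have sa: "sin a > 0" using a0 by (simp add: sin_gt_zero)
  have sb: "sin b > 0" using b0 by (simp add: sin_gt_zero)
  have "sin (b - a) = sin b * cos a - cos b * sin a" by (simp add: sin_diff)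
  also have "\<dots> = sin a * sin b * (cot a - cot b)"
    using sa sb by (simp add: cot_def field_simps)
  also have "\<dots> = 0" using eq by (simp add: a_def b_def)
  finally have "sin (b - a) = 0" .
  moreover have "b - a \<noteq> 0" using ne n0 by (auto simp: a_def b_def field_simps)
  moreover have "\<bar>b - a\<bar> < pi" using a0 b0 by auto
  ultimately show False
    by (metis abs_zero sin_zero_pi_iff)
qed

lemma cot_root:
  assumes "n \<ge> 2" "k \<in> {1..n-1}"
  shows "(complex_of_real (cot (real k * pi / real n)) + \<i>) ^ n
       = (complex_of_real (cot (real k * pi / real n)) - \<i>) ^ n"
proof -
  define a where "a = real k * pi / real n"
  have n0: "real n > 0" using assms by simp
  have a0: "0 < a" "a < pi" using assms n0 by (auto simp: a_def field_simps)
  have sa: "sin a > 0" using a0 by (simp add: sin_gt_zero)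
  have 1: "complex_of_real (cot a) + \<i> = cis a / complex_of_real (sin a)"
    using sa by (simp add: cot_def cis.ctr Complex_eq field_simps)
  have 2: "complex_of_real (cot a) - \<i> = cis (-a) / complex_of_real (sin a)"
    using sa by (simp add: cot_def cis.ctr Complex_eq field_simps)
  have na: "real n * a = real k * pi" using n0 by (simp add: a_def)
  have "cis (real n * a) = cis (- (real n * a))"
    unfolding na by (simp add: cis.ctr Complex_eq)
  moreover have "cis a ^ n = cis (real n * a)" by (rule Complex.DeMoivre)
  moreover have "cis (-a) ^ n = cis (- (real n * a))" by (subst Complex.DeMoivre) simp
  ultimately have "cis a ^ n = cis (-a) ^ n" by simp
  then show ?thesis unfolding a_def[symmetric] 1 2 by (simp add: power_divide)
qed


definition cc :: "nat \<Rightarrow> nat \<Rightarrow> complex" where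
  "cc n k = complex_of_real (cot (real k * pi / real n))"

lemma poly_identity:
  assumes n2: "n \<ge> 2"
  shows "[:\<i>,1:]^n - [:-\<i>,1:]^n = smult (2 * \<i> * of_nat n) (\<Prod>k\<in>{1..n-1}. [:- cc n k, 1:])"
    (is "?P = smult ?c ?pr")
proof -
  define D where "D = ?P - smult ?c ?pr"
  have degpr: "degree ?pr = n - 1"
    by (subst degree_prod_eq_sum_degree) auto
  have lcpr: "lead_coeff ?pr = 1"
    by (simp add: lead_coeff_prod)
  have cP: "coeff ?P i = of_nat (n choose i) * (\<i> ^ (n - i) - (-\<i>) ^ (n - i))" if "i \<le> n" for i
    using that by (simp add: coeff_linear_poly_power algebra_simps)
  have cD: "coeff D i = 0" if "i > n - 2" for i
  proof (cases "i = n - 1")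
    case True
    have "n - (n - 1) = 1" using n2 by simp
    have ch: "n choose (n - 1) = n" using n2 by (cases n) auto
    have "coeff ?P i = of_nat (n choose (n - 1)) * (\<i> ^ 1 - (-\<i>) ^ 1)"
      using cP[of "n - 1"] True n2 \<open>n - (n - 1) = 1\<close> by simp
    then have "coeff ?P i = 2 * \<i> * of_nat n" using ch by simp
    moreover have "coeff ?pr i = 1" using degpr lcpr True by simp
    ultimately show ?thesis by (simp add: D_def)
  next
    case False
    then have i: "i \<ge> n" using that n2 by simp
    have "coeff ?P i = 0"
    proof (cases "i = n")
      case True then show ?thesis using cP[of n] by simp
    next
      case False
      then have "i > n" using i by simp
      then show ?thesis
        by (simp add: coeff_eq_0 degree_linear_power)
    qed
    moreover have "coeff ?pr i = 0" using degpr i n2 by (simp add: coeff_eq_0)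
    ultimately show ?thesis by (simp add: D_def)
  qed
  have degD: "degree D \<le> n - 2" using cD by (intro degree_le) auto
  show ?thesis
  proof (rule ccontr)
    assume "?P \<noteq> smult ?c ?pr"
    then have D0: "D \<noteq> 0" by (simp add: D_def)
    have sub: "cc n ` {1..n-1} \<subseteq> {x. poly D x = 0}"
    proof
      fix x assume "x \<in> cc n ` {1..n-1}"
      then obtain k where k: "k \<in> {1..n-1}" "x = cc n k" by auto
      have "poly ?P x = 0"
        using cot_root[OF n2 k(1)] k(2) by (simp add: cc_def add.commute)
      moreover have "poly ?pr x = 0"
        using k by (simp add: poly_prod) (rule bexI[of _ k], auto)
      ultimately show "x \<in> {x. poly D x = 0}" by (simp add: D_def)
    qed
    have inj: "inj_on (cc n) {1..n-1}"
      by (rule inj_onI) (use cot_inj[OF n2] in \<open>auto simp: cc_def\<close>)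
    have "n - 1 = card (cc n ` {1..n-1})" using card_image[OF inj] by simp
    also have "\<dots> \<le> card {x. poly D x = 0}"
      by (intro card_mono poly_roots_finite D0 sub)
    also have "\<dots> \<le> degree D" by (rule card_poly_roots_bound[OF D0])
    finally show False using degD n2 by simp
  qed
qed


lemma poly_identity2:
  assumes n2: "n \<ge> 2"
  shows "smult (2 * \<i> * of_nat n) (pCons 0 (\<Prod>k\<in>{1..n-1}. [:1, - cc n k:]))
       = [:1,\<i>:]^n - [:1,-\<i>:]^n"
proof (rule poly_ext)
  fix y :: complex
  show "poly (smult (2 * \<i> * of_nat n) (pCons 0 (\<Prod>k\<in>{1..n-1}. [:1, - cc n k:]))) y
       = poly ([:1,\<i>:]^n - [:1,-\<i>:]^n) y"
  proof (cases "y = 0")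
    case True then show ?thesis by simp
  next
    case False
    define x where "x = 1 / y"
    have xy: "x * y = 1" using False by (simp add: x_def)
    have "poly ([:\<i>,1:]^n - [:-\<i>,1:]^n) x = poly (smult (2 * \<i> * of_nat n) (\<Prod>k\<in>{1..n-1}. [:- cc n k, 1:])) x"
      by (simp only: poly_identity[OF n2])
    then have e: "(\<i> + x)^n - (x - \<i>)^n = 2 * \<i> * of_nat n * (\<Prod>k\<in>{1..n-1}. x - cc n k)"
      by (simp add: poly_prod algebra_simps)
    have yn: "y ^ n = y * (\<Prod>k\<in>{1..n-1}. y)"
      using n2 by (simp add: power_Suc[symmetric])
    have "poly ([:1,\<i>:]^n - [:1,-\<i>:]^n) y = (1 + \<i> * y)^n - (1 - \<i> * y)^n"
      by (simp add: algebra_simps)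
    also have "\<dots> = y^n * ((\<i> + x)^n - (x - \<i>)^n)"
      using xy by (simp add: power_mult_distrib[symmetric] algebra_simps)
    also have "\<dots> = 2 * \<i> * of_nat n * y * (\<Prod>k\<in>{1..n-1}. y * (x - cc n k))"
      unfolding e yn by (simp add: prod.distrib)
    also have "\<dots> = 2 * \<i> * of_nat n * y * (\<Prod>k\<in>{1..n-1}. 1 - cc n k * y)"
      using xy by (simp add: algebra_simps)
    also have "\<dots> = poly (smult (2 * \<i> * of_nat n) (pCons 0 (\<Prod>k\<in>{1..n-1}. [:1, - cc n k:]))) y"
      by (simp add: poly_prod algebra_simps)
    finally show ?thesis ..
  qed
qed

lemma fps_identity:
  assumes n2: "n \<ge> 2"
  shows "fps_const (2 * \<i> * of_nat n) * (fps_X * (\<Prod>k\<in>{1..n-1}. 1 - fps_const (cc n k) * fps_X))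
       = (1 + fps_const \<i> * fps_X)^n - (1 - fps_const \<i> * fps_X)^n"
proof -
  have "fps_of_poly (smult (2 * \<i> * of_nat n) (pCons 0 (\<Prod>k\<in>{1..n-1}. [:1, - cc n k:])))
       = fps_of_poly ([:1,\<i>:]^n - [:1,-\<i>:]^n)"
    by (simp only: poly_identity2[OF n2])
  then show ?thesis
    by (simp add: fps_of_poly_smult fps_of_poly_pCons fps_of_poly_prod fps_of_poly_linear'
        fps_of_poly_diff fps_of_poly_power fps_const_neg[symmetric] mult.commute del: fps_const_neg)
      (simp add: mult.left_commute)
qed


definition cfps :: "real fps \<Rightarrow> complex fps" where
  "cfps f = Abs_fps (\<lambda>j. complex_of_real (fps_nth f j))"

lemma cfps_nth [simp]: "fps_nth (cfps f) j = complex_of_real (fps_nth f j)"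
  by (simp add: cfps_def)

lemma cfps_mult: "cfps (a * b) = cfps a * cfps b"
  by (rule fps_ext) (simp add: fps_mult_nth)

lemma cfps_diff: "cfps (a - b) = cfps a - cfps b"
  by (rule fps_ext) simp

lemma cfps_one [simp]: "cfps 1 = 1"
  by (rule fps_ext) simp

lemma cfps_X [simp]: "cfps fps_X = fps_X"
  by (rule fps_ext) (simp add: fps_X_def)

lemma cfps_power: "cfps (a ^ k) = cfps a ^ k"
  by (induction k) (simp_all add: cfps_mult)

lemma cfps_exp [simp]: "cfps (fps_exp 1) = fps_exp 1"
  by (rule fps_ext) (simp add: fps_exp_def)

definition Tc :: "complex fps" where "Tc = cfps Tr"

lemma Tc_nth: "fps_nth Tc j = (if odd j then (-1)^(j div 2) / of_nat j else 0)"
  by (simp add: Tc_def Tr_def)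

lemma Tc_0 [simp]: "fps_nth Tc 0 = 0"
  by (simp add: Tc_nth)

lemma Tc_nz: "Tc \<noteq> 0"
proof
  assume "Tc = 0"
  then have "fps_nth Tc 1 = 0" by simp
  then show False by (simp add: Tc_nth)
qed

lemma Tc_deriv: "(1 + fps_X^2) * fps_deriv Tc = 1"
proof (rule fps_ext)
  fix j
  have "fps_nth ((1 + fps_X^2) * fps_deriv Tc) j = fps_nth (fps_deriv Tc) j + fps_nth (fps_X^2 * fps_deriv Tc) j"
    by (simp add: distrib_right)
  also have "\<dots> = fps_nth (1::complex fps) j"
  proof (cases "j < 2")
    case True
    then have "j = 0 \<or> j = 1" by auto
    then show ?thesis by (auto simp: fps_X_power_mult_nth Tc_nth)
  next
    case False
    then obtain i where j: "j = i + 2" by (metis add.commute le_Suc_ex not_less)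
    show ?thesis
    proof (cases "even i")
      case True
      then obtain l where i: "i = 2 * l" by blast
      have "odd (2*l+3)" "odd (2*l+1)" by auto
      then show ?thesis using j i
        by (simp add: fps_X_power_mult_nth Tc_nth del: of_nat_Suc)
    next
      case False
      then show ?thesis using j by (simp add: fps_X_power_mult_nth Tc_nth)
    qed
  qed
  finally show "fps_nth ((1 + fps_X^2) * fps_deriv Tc) j = fps_nth (1::complex fps) j" .
qed

lemma Tc_deriv_nth: "fps_nth (fps_deriv Tc) j = (if even j then (-1)^(j div 2) else 0)"
  by (auto simp: Tc_nth simp del: of_nat_Suc)

definition Geo :: "complex \<Rightarrow> complex fps" where "Geo c = Abs_fps (\<lambda>p. c ^ p)"

lemma Geo_inv: "Geo c * (1 - fps_const c * fps_X) = 1"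
proof (rule fps_ext)
  fix j
  show "fps_nth (Geo c * (1 - fps_const c * fps_X)) j = fps_nth (1::complex fps) j"
    by (cases j) (simp_all add: Geo_def algebra_simps fps_mult_fps_X_commute[symmetric])
qed

lemma Geo_sum:
  assumes "finite K"
  shows "(\<Sum>k\<in>K. Geo (c k)) * (\<Prod>k\<in>K. 1 - fps_const (c k) * fps_X)
       = of_nat (card K) * (\<Prod>k\<in>K. 1 - fps_const (c k) * fps_X)
         - fps_X * fps_deriv (\<Prod>k\<in>K. 1 - fps_const (c k) * fps_X)"
  using assms
proof (induction K rule: finite_induct)
  case empty
  then show ?case by simp
next
  case (insert a K)
  define P where "P = (\<Prod>k\<in>K. 1 - fps_const (c k) * fps_X)"
  define L where "L = 1 - fps_const (c a) * fps_X"
  have IH: "(\<Sum>k\<in>K. Geo (c k)) * P = of_nat (card K) * P - fps_X * fps_deriv P"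
    using insert.IH by (simp add: P_def)
  have GL: "Geo (c a) * L = 1" by (simp add: L_def Geo_inv)
  have dL: "fps_deriv L = - fps_const (c a)" by (simp add: L_def)
  have "(\<Sum>k\<in>insert a K. Geo (c k)) * (L * P) = Geo (c a) * L * P + L * ((\<Sum>k\<in>K. Geo (c k)) * P)"
    using insert by (simp add: algebra_simps)
  also have "\<dots> = P + L * (of_nat (card K) * P - fps_X * fps_deriv P)"
    by (simp add: GL IH)
  also have "\<dots> = of_nat (card K + 1) * (L * P) - fps_X * fps_deriv (L * P)"
    by (simp add: dL algebra_simps L_def)
  finally show ?case using insert by (simp add: P_def L_def)
qed


abbreviation "fI \<equiv> fps_const \<i> :: complex fps"

lemma fI_sq: "fI * fI = -1"
  by (simp flip: fps_const_mult)

lemma ode_unique: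
  fixes Y :: "complex fps"
  assumes ode: "(1 + fps_X^2) * fps_deriv Y = (fI + fps_X) * Y" and Y0: "fps_nth Y 0 = 0"
  shows "Y = 0"
proof (rule ccontr)
  assume nz: "Y \<noteq> 0"
  define d where "d = subdegree Y"
  have d0: "d > 0" using Y0 nz unfolding d_def
    by (metis gr0I nth_subdegree_nonzero)
  have Yd: "fps_nth Y d \<noteq> 0" using nz by (simp add: d_def)
  have low: "fps_nth Y i = 0" if "i < d" for i using that by (auto simp: d_def)
  have "fps_nth ((1 + fps_X^2) * fps_deriv Y) (d - 1)
      = fps_nth (fps_deriv Y) (d - 1) + fps_nth (fps_X^2 * fps_deriv Y) (d - 1)"
    by (simp add: distrib_right)
  also have "fps_nth (fps_X^2 * fps_deriv Y) (d - 1) = 0"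
    using low d0 by (auto simp: fps_X_power_mult_nth)
  also have "fps_nth (fps_deriv Y) (d - 1) = of_nat d * fps_nth Y d"
    using d0 by simp
  finally have L: "fps_nth ((1 + fps_X^2) * fps_deriv Y) (d - 1) = of_nat d * fps_nth Y d" by simp
  have "fps_nth ((fI + fps_X) * Y) (d - 1) = \<i> * fps_nth Y (d - 1) + fps_nth (fps_X * Y) (d - 1)"
    by (simp add: distrib_right)
  also have "\<dots> = 0" using low d0 by auto
  finally have "of_nat d * fps_nth Y d = 0" using L ode by simp
  then show False using d0 Yd by simp
qed

definition FF :: "complex fps" where "FF = fps_exp (2 * \<i>) oo Tc"

lemma FF_0 [simp]: "fps_nth FF 0 = 1"
  by (simp add: FF_def)

lemma FF_deriv: "(1 + fps_X^2) * fps_deriv FF = fps_const (2 * \<i>) * FF"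
proof -
  have "fps_deriv FF = (fps_const (2 * \<i>) * fps_exp (2 * \<i>) oo Tc) * fps_deriv Tc"
    unfolding FF_def by (simp add: fps_compose_deriv)
  also have "\<dots> = fps_const (2 * \<i>) * FF * fps_deriv Tc"
    by (simp add: fps_compose_mult_distrib FF_def)
  finally have eq: "fps_deriv FF = fps_const (2 * \<i>) * FF * fps_deriv Tc" .
  have "(1 + fps_X^2) * fps_deriv FF = fps_const (2 * \<i>) * FF * ((1 + fps_X^2) * fps_deriv Tc)"
    unfolding eq by (simp only: mult_ac)
  then show ?thesis by (simp add: Tc_deriv)
qed

lemma FF_eq: "FF * (1 - fI * fps_X) = 1 + fI * fps_X"
proof -
  define Y where "Y = FF * (1 - fI * fps_X) - (1 + fI * fps_X)"
  have dY: "fps_deriv Y = fps_deriv FF * (1 - fI * fps_X) - fI * FF - fI"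
    unfolding Y_def by (simp add: algebra_simps)
  have "(1 + fps_X^2) * fps_deriv Y
      = ((1 + fps_X^2) * fps_deriv FF) * (1 - fI * fps_X) - fI * (1 + fps_X^2) * FF - (1 + fps_X^2) * fI"
    unfolding dY by (simp add: algebra_simps)
  also have "\<dots> = 2 * fI * FF * (1 - fI * fps_X) - fI * (1 + fps_X^2) * FF - (1 + fps_X^2) * fI"
  proof -
    have c2: "fps_const (2 * \<i>) = 2 * fI" by (simp add: fps_numeral_fps_const)
    show ?thesis by (simp only: FF_deriv c2)
  qed
  also have "\<dots> = (fI + fps_X) * Y + (fI * fI + 1) * (fps_X - fps_X * FF)"
    unfolding power2_eq_square Y_def by (simp add: algebra_simps)
  finally have "(1 + fps_X^2) * fps_deriv Y = (fI + fps_X) * Y + (fI * fI + 1) * (fps_X - fps_X * FF)" .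
  moreover have "fI * fI + 1 = 0" by (simp add: fI_sq)
  ultimately have "(1 + fps_X^2) * fps_deriv Y = (fI + fps_X) * Y" by simp
  then have "Y = 0" by (rule ode_unique) (simp add: Y_def)
  then show ?thesis by (simp add: Y_def)
qed


definition Gr :: "real fps" where "Gr = fps_X / (fps_exp 1 - 1)"

lemma bernoulli_Gr: "bernoulli_num j = fact j * fps_nth Gr j"
  by (simp add: bernoulli_num_def Gr_def)

lemma Gr_eq: "Gr * (fps_exp 1 - 1) = fps_X"
proof -
  have ne: "(fps_exp 1 - 1 :: real fps) \<noteq> 0"
  proof
    assume "(fps_exp 1 - 1 :: real fps) = 0"
    then have "fps_nth (fps_exp 1 - 1 :: real fps) 1 = 0" by simp
    then show False by (simp add: fps_exp_def)
  qed
  have sd: "subdegree (fps_exp 1 - 1 :: real fps) = 1"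
    by (rule subdegreeI) (auto simp: fps_exp_def)
  have "(fps_exp 1 - 1 :: real fps) dvd fps_X"
    using ne sd by (subst fps_dvd_iff) auto
  then show ?thesis unfolding Gr_def by (rule dvd_div_mult_self)
qed

definition Gc :: "complex fps" where "Gc = cfps Gr"

lemma Gc_eq: "Gc * (fps_exp 1 - 1) = fps_X"
proof -
  have "cfps (Gr * (fps_exp 1 - 1)) = cfps fps_X" by (simp only: Gr_eq)
  then show ?thesis by (simp add: cfps_mult cfps_diff Gc_def)
qed

lemma G_lin: "(Gc oo (fps_const c * fps_X)) * (fps_exp c - 1) = fps_const c * fps_X"
proof -
  have "(Gc * (fps_exp 1 - 1)) oo (fps_const c * fps_X) = fps_X oo (fps_const c * fps_X)"
    by (simp only: Gc_eq)
  then show ?thesis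
    by (simp add: fps_compose_mult_distrib fps_compose_sub_distrib)
qed

definition Gp :: "complex \<Rightarrow> complex fps" where "Gp c = Gc oo (fps_const c * fps_X) oo Tc"

lemma Gp_eq: "Gp c * ((fps_exp c oo Tc) - 1) = fps_const c * Tc"
proof -
  have "((Gc oo (fps_const c * fps_X)) * (fps_exp c - 1)) oo Tc = (fps_const c * fps_X) oo Tc"
    by (simp only: G_lin)
  then show ?thesis
    by (simp add: fps_compose_mult_distrib fps_compose_sub_distrib Gp_def)
qed

definition FFb :: "complex fps" where "FFb = fps_exp (- 2 * \<i>) oo Tc"

lemma FFb_FF: "FFb * FF = 1"
proof -
  have "(fps_exp (- 2 * \<i>) * fps_exp (2 * \<i>)) oo Tc = 1"
    by (simp flip: fps_exp_add_mult)
  then show ?thesis by (simp add: fps_compose_mult_distrib FFb_def FF_def)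
qed

lemma FFb_eq: "FFb * (1 + fI * fps_X) = 1 - fI * fps_X"
proof -
  have "FFb * (1 + fI * fps_X) = FFb * (FF * (1 - fI * fps_X))"
    by (simp only: FF_eq)
  also have "\<dots> = (FFb * FF) * (1 - fI * fps_X)"
    by (simp only: mult.assoc)
  finally have "FFb * (1 + fI * fps_X) = (FFb * FF) * (1 - fI * fps_X)" .
  then show ?thesis by (simp add: FFb_FF)
qed

lemma exp_T_pow:
  "fps_exp (of_nat n * c) oo Tc = (fps_exp c oo Tc) ^ n"
  by (simp add: fps_compose_power fps_exp_power_mult)

lemma Ev_identity:
  fixes n :: nat
  defines "a \<equiv> 2 * \<i> * of_nat n"
  defines "Z \<equiv> (1 + fI * fps_X) ^ n" and "Zb \<equiv> (1 - fI * fps_X) ^ n"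
  shows "(Gp a + Gp (- a)) * (Z - Zb) = fps_const a * Tc * (Z + Zb)"
proof -
  have e1: "fps_exp a oo Tc = FF ^ n"
    using exp_T_pow[of n "2 * \<i>"] by (simp add: a_def FF_def mult.commute)
  have e2: "fps_exp (- a) oo Tc = FFb ^ n"
    using exp_T_pow[of n "- 2 * \<i>"] by (simp add: a_def FFb_def mult.commute)
  have z1: "FF ^ n * Zb = Z" by (simp add: Z_def Zb_def FF_eq flip: power_mult_distrib)
  have z2: "FFb ^ n * Z = Zb" by (simp add: Z_def Zb_def FFb_eq flip: power_mult_distrib)
  have h1: "Gp a * (FF ^ n - 1) = fps_const a * Tc" using Gp_eq[of a] e1 by simp
  have h2: "Gp (-a) * (FFb ^ n - 1) = fps_const (-a) * Tc" using Gp_eq[of "-a"] e2 by simp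
  have k1: "Gp a * (Z - Zb) = fps_const a * Tc * Zb"
  proof -
    have "Gp a * (Z - Zb) = Gp a * (FF ^ n - 1) * Zb"
      by (simp add: z1[symmetric] algebra_simps)
    then show ?thesis by (simp add: h1)
  qed
  have k2: "Gp (-a) * (Z - Zb) = fps_const a * Tc * Z"
  proof -
    have "Gp (-a) * (Z - Zb) = - (Gp (-a) * (FFb ^ n - 1) * Z)"
      by (simp add: z2[symmetric] algebra_simps)
    then show ?thesis by (simp add: h2 fps_const_neg[symmetric] del: fps_const_neg)
  qed
  show ?thesis using k1 k2 by (simp add: algebra_simps)
qed


lemma main_algebra:
  fixes S Q Zm Zp E1 En Psi T T' X A :: "complex fps" and m :: complex
  assumes a: "S * Q = (of_nat (n - 1)) * Q - X * fps_deriv Q"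
    and b: "A * (X * Q) = Zm"
    and bd: "A * (Q + X * fps_deriv Q) = fps_deriv Zm"
    and c: "(1 + X^2) * fps_deriv Zm = fI * of_nat n * Zp + of_nat n * X * Zm"
    and d: "En * Zm = A * T * Zp"
    and d1: "E1 * X = 2 * T"
    and e: "2 * T * Psi = En - E1"
    and f: "(1 + X^2) * T' = 1"
    and A: "A = 2 * fI * of_nat n"
    and nz: "X \<noteq> 0" "T \<noteq> 0" "Q \<noteq> 0" "A \<noteq> 0"
    and n1: "n \<ge> 1"
  shows "S = T' * (of_nat (n - 1) - X * Psi)"
proof -
  have s1: "2 * T * (X * Psi * Zm) = 2 * T * (fI * of_nat n * X * Zp - Zm)"
  proof -
    have "2 * T * (X * Psi * Zm) = X * Zm * (2 * T * Psi)" by (simp only: mult_ac)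
    also have "\<dots> = X * Zm * (En - E1)" by (simp only: e)
    also have "\<dots> = X * (En * Zm) - (E1 * X) * Zm" by (simp add: algebra_simps)
    also have "\<dots> = X * (A * T * Zp) - (2 * T) * Zm" by (simp only: d d1)
    also have "\<dots> = 2 * T * (fI * of_nat n * X * Zp - Zm)" by (simp add: A algebra_simps)
    finally show ?thesis .
  qed
  have T2: "2 * T \<noteq> 0" using nz by simp
  have dag: "X * Psi * Zm = fI * of_nat n * X * Zp - Zm"
    using mult_left_cancel[OF T2] s1 by blast
  have of1: "(of_nat (n - 1) :: complex fps) = of_nat n - 1" using n1 by (simp add: of_nat_diff)
  have s2: "A * X^2 * ((1 + X^2) * fps_deriv Q) = A * X^2 * (of_nat (n - 1) * X * Q + Q * Psi)"
  proof -
    have AXQ': "A * X * fps_deriv Q = fps_deriv Zm - A * Q"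
      using bd by (simp add: algebra_simps)
    have "A * X^2 * ((1 + X^2) * fps_deriv Q) = X * ((1 + X^2) * (A * X * fps_deriv Q))"
      by (simp add: power2_eq_square algebra_simps)
    also have "\<dots> = X * ((1 + X^2) * fps_deriv Zm) - (1 + X^2) * (A * (X * Q))"
      unfolding AXQ' by (simp add: algebra_simps)
    also have "\<dots> = X * (fI * of_nat n * Zp + of_nat n * X * Zm) - (1 + X^2) * Zm"
      by (simp only: b c)
    also have "\<dots> = (of_nat n - 1) * X^2 * Zm + (fI * of_nat n * X * Zp - Zm)"
      by (simp add: power2_eq_square algebra_simps)
    also have "\<dots> = (of_nat n - 1) * X^2 * Zm + X * Psi * Zm"
      by (simp only: dag)
    also have "\<dots> = A * X^2 * (of_nat (n - 1) * X * Q + Q * Psi)"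
      unfolding of1 b[symmetric] by (simp add: power2_eq_square algebra_simps)
    finally show ?thesis .
  qed
  have AX2: "A * X^2 \<noteq> 0" using nz by simp
  have g': "(1 + X^2) * fps_deriv Q = of_nat (n - 1) * X * Q + Q * Psi"
    using mult_left_cancel[OF AX2] s2 by blast
  have s3: "Q * (S * (1 + X^2)) = Q * (of_nat (n - 1) - X * Psi)"
  proof -
    have "Q * (S * (1 + X^2)) = (S * Q) * (1 + X^2)" by (simp only: mult_ac)
    also have "\<dots> = of_nat (n - 1) * Q * (1 + X^2) - X * ((1 + X^2) * fps_deriv Q)"
      by (simp only: a) (simp add: algebra_simps)
    also have "\<dots> = of_nat (n - 1) * Q * (1 + X^2) - X * (of_nat (n - 1) * X * Q + Q * Psi)"
      by (simp only: g')
    also have "\<dots> = Q * (of_nat (n - 1) - X * Psi)"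
      by (simp add: power2_eq_square algebra_simps)
    finally show ?thesis .
  qed
  have s4: "S * (1 + X^2) = of_nat (n - 1) - X * Psi"
    using mult_left_cancel[OF nz(3)] s3 by blast
  have "S = S * ((1 + X^2) * T')" by (simp add: f)
  also have "\<dots> = T' * (S * (1 + X^2))" by (simp only: mult_ac)
  also have "\<dots> = T' * (of_nat (n - 1) - X * Psi)" by (simp only: s4)
  finally show ?thesis .
qed


definition Lam :: "nat \<Rightarrow> complex fps" where
  "Lam n = Abs_fps (\<lambda>j. if even j \<and> j > 0 then (2 * \<i>) ^ j * fps_nth Gc j * (of_nat n ^ j - 1) / of_nat j else 0)"

lemma Lam_deriv:
  "2 * (fps_X * fps_deriv (Lam n))
   = ((Gc oo (fps_const (2 * \<i> * of_nat n) * fps_X)) + (Gc oo (fps_const (- (2 * \<i> * of_nat n)) * fps_X)))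
   - ((Gc oo (fps_const (2 * \<i>) * fps_X)) + (Gc oo (fps_const (- (2 * \<i>)) * fps_X)))"
proof (rule fps_ext)
  fix j
  show "fps_nth (2 * (fps_X * fps_deriv (Lam n))) j =
        fps_nth (((Gc oo (fps_const (2 * \<i> * of_nat n) * fps_X)) + (Gc oo (fps_const (- (2 * \<i> * of_nat n)) * fps_X)))
   - ((Gc oo (fps_const (2 * \<i>) * fps_X)) + (Gc oo (fps_const (- (2 * \<i>)) * fps_X)))) j"
  proof -
    let ?a = "2 * \<i> * of_nat n :: complex" and ?b = "2 * \<i> :: complex"
    have R: "fps_nth (((Gc oo (fps_const ?a * fps_X)) + (Gc oo (fps_const (- ?a) * fps_X)))
       - ((Gc oo (fps_const ?b * fps_X)) + (Gc oo (fps_const (- ?b) * fps_X)))) j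
       = fps_nth Gc j * (?a ^ j + (- ?a) ^ j - ?b ^ j - (- ?b) ^ j)"
      by (simp only: fps_add_nth fps_sub_nth fps_nth_compose_linear) (simp add: algebra_simps)
    have L: "fps_nth (2 * (fps_X * fps_deriv (Lam n))) j = 2 * of_nat j * fps_nth (Lam n) j"
      by (cases j) (simp_all del: of_nat_Suc)
    show ?thesis
    proof (cases "even j \<and> j > 0")
      case True
      then have "of_nat j \<noteq> (0::complex)" by simp
      then show ?thesis unfolding R L using True
        by (simp add: Lam_def power_mult_distrib power_minus' field_simps)
    next
      case False
      then have "j = 0 \<or> odd j" by auto
      then show ?thesis unfolding R L
        by (auto simp add: Lam_def power_minus')
    qed
  qed
qed


lemma Psi_eq:
  "2 * Tc * (fps_deriv (Lam n) oo Tc)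
   = (Gp (2 * \<i> * of_nat n) + Gp (- (2 * \<i> * of_nat n))) - (Gp (2 * \<i>) + Gp (- (2 * \<i>)))"
proof -
  have "(2 * (fps_X * fps_deriv (Lam n))) oo Tc
     = (((Gc oo (fps_const (2 * \<i> * of_nat n) * fps_X)) + (Gc oo (fps_const (- (2 * \<i> * of_nat n)) * fps_X)))
       - ((Gc oo (fps_const (2 * \<i>) * fps_X)) + (Gc oo (fps_const (- (2 * \<i>)) * fps_X)))) oo Tc"
    by (simp only: Lam_deriv)
  moreover have "(2 * (fps_X * fps_deriv (Lam n))) oo Tc = 2 * Tc * (fps_deriv (Lam n) oo Tc)"
    by (simp add: fps_compose_mult_distrib fps_numeral_fps_const mult.assoc)
  ultimately show ?thesis
    by (simp add: fps_compose_add_distrib fps_compose_sub_distrib Gp_def)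
qed

lemma ring_aux:
  fixes u X P M N :: "complex fps"
  shows "(1 + X^2) * (N * u * P - - (N * u * M))
     = u * N * ((1 + u * X) * P + (1 - u * X) * M)
      + N * X * ((1 + u * X) * P - (1 - u * X) * M)
      - (u * u + 1) * (N * X * (P - M))"
  by (simp add: power2_eq_square algebra_simps)

lemma Z_deriv:
  assumes n1: "n \<ge> 1"
  shows "(1 + fps_X^2) * fps_deriv ((1 + fI * fps_X) ^ n - (1 - fI * fps_X) ^ n)
    = fI * of_nat n * ((1 + fI * fps_X) ^ n + (1 - fI * fps_X) ^ n)
      + of_nat n * fps_X * ((1 + fI * fps_X) ^ n - (1 - fI * fps_X) ^ n)"
proof -
  define P where "P = (1 + fI * fps_X) ^ (n - 1)"
  define M where "M = (1 - fI * fps_X) ^ (n - 1)"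
  have Pn: "(1 + fI * fps_X) ^ n = (1 + fI * fps_X) * P"
    using n1 by (simp add: P_def power_Suc[symmetric])
  have Mn: "(1 - fI * fps_X) ^ n = (1 - fI * fps_X) * M"
    using n1 by (simp add: M_def power_Suc[symmetric])
  have dP: "fps_deriv ((1 + fI * fps_X) ^ n) = of_nat n * fI * P"
    by (simp add: fps_deriv_power' P_def)
  have dM: "fps_deriv ((1 - fI * fps_X) ^ n) = - (of_nat n * fI * M)"
    by (simp add: fps_deriv_power' M_def fps_const_neg[symmetric] del: fps_const_neg)
  have "(1 + fps_X^2) * (of_nat n * fI * P - - (of_nat n * fI * M))
     = fI * of_nat n * ((1 + fI * fps_X) * P + (1 - fI * fps_X) * M)
      + of_nat n * fps_X * ((1 + fI * fps_X) * P - (1 - fI * fps_X) * M)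
      - (fI * fI + 1) * (of_nat n * fps_X * (P - M))"
    by (rule ring_aux)
  moreover have "fI * fI + 1 = 0" by (simp add: fI_sq)
  ultimately show ?thesis unfolding fps_deriv_sub dP dM unfolding Pn Mn
    by simp
qed

lemma E1_eq: "(Gp (2 * \<i>) + Gp (- (2 * \<i>))) * fps_X = 2 * Tc"
proof -
  have "(Gp (2 * \<i>) + Gp (- (2 * \<i>))) * ((1 + fI * fps_X) - (1 - fI * fps_X))
      = fps_const (2 * \<i>) * Tc * ((1 + fI * fps_X) + (1 - fI * fps_X))"
    using Ev_identity[of 1] by simp
  then have "(2 * fI) * ((Gp (2 * \<i>) + Gp (- (2 * \<i>))) * fps_X) = (2 * fI) * (2 * Tc)"
    by (simp add: fps_numeral_fps_const algebra_simps)
  moreover have "2 * fI \<noteq> 0" by (simp add: fps_numeral_fps_const)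
  ultimately show ?thesis using mult_left_cancel by blast
qed


lemma complex_main:
  assumes n2: "n \<ge> 2"
  shows "(\<Sum>k\<in>{1..n-1}. Geo (cc n k)) = of_nat (n - 1) * fps_deriv Tc - fps_X * fps_deriv (Lam n oo Tc)"
proof -
  define Q where "Q = (\<Prod>k\<in>{1..n-1}. 1 - fps_const (cc n k) * fps_X)"
  define S where "S = (\<Sum>k\<in>{1..n-1}. Geo (cc n k))"
  define A where "A = fps_const (2 * \<i> * of_nat n)"
  define Zm where "Zm = (1 + fI * fps_X) ^ n - (1 - fI * fps_X) ^ n"
  define Zp where "Zp = (1 + fI * fps_X) ^ n + (1 - fI * fps_X) ^ n"
  define En where "En = Gp (2 * \<i> * of_nat n) + Gp (- (2 * \<i> * of_nat n))"
  define E1 where "E1 = Gp (2 * \<i>) + Gp (- (2 * \<i>))"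
  define Psi where "Psi = fps_deriv (Lam n) oo Tc"
  have a: "S * Q = of_nat (n - 1) * Q - fps_X * fps_deriv Q"
    using Geo_sum[of "{1..n-1}" "cc n"] by (simp add: S_def Q_def)
  have b: "A * (fps_X * Q) = Zm"
    using fps_identity[OF n2] by (simp add: A_def Q_def Zm_def)
  have bd: "A * (Q + fps_X * fps_deriv Q) = fps_deriv Zm"
  proof -
    have "fps_deriv (A * (fps_X * Q)) = fps_deriv Zm" by (simp only: b)
    then show ?thesis by (simp add: A_def algebra_simps)
  qed
  have c: "(1 + fps_X^2) * fps_deriv Zm = fI * of_nat n * Zp + of_nat n * fps_X * Zm"
    using Z_deriv[of n] n2 by (simp add: Zm_def Zp_def)
  have d: "En * Zm = A * Tc * Zp"
    using Ev_identity[of n] by (simp add: En_def Zm_def Zp_def A_def)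
  have d1: "E1 * fps_X = 2 * Tc" using E1_eq by (simp add: E1_def)
  have e: "2 * Tc * Psi = En - E1" using Psi_eq[of n] by (simp add: Psi_def En_def E1_def)
  have Aeq: "A = 2 * fI * of_nat n"
    by (simp add: A_def fps_numeral_fps_const fps_of_nat[symmetric])
  have Qnz: "Q \<noteq> 0"
  proof -
    have "fps_nth (1 - fps_const (cc n k) * fps_X) 0 = 1" for k by simp
    then have "1 - fps_const (cc n k) * fps_X \<noteq> 0" for k
      by (metis fps_zero_nth zero_neq_one)
    then show ?thesis by (simp add: Q_def)
  qed
  have Anz: "A \<noteq> 0" using n2 by (simp add: A_def)
  have main: "S = fps_deriv Tc * (of_nat (n - 1) - fps_X * Psi)"
    by (rule main_algebra[OF a b bd c d d1 e Tc_deriv Aeq fps_X_neq_zero Tc_nz Qnz Anz]) (use n2 in simp)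
  have dPhi: "fps_deriv (Lam n oo Tc) = Psi * fps_deriv Tc"
    by (simp add: fps_compose_deriv Psi_def)
  show ?thesis unfolding S_def[symmetric] main dPhi by (simp add: algebra_simps)
qed


lemma sum_even_reindex:
  fixes f :: "nat \<Rightarrow> 'a::comm_monoid_add" and m :: nat
  assumes "\<And>i. i = 0 \<or> odd i \<Longrightarrow> f i = 0"
  shows "(\<Sum>i=0..2*m. f i) = (\<Sum>k=1..m. f (2*k))"
proof (induction m)
  case 0 then show ?case using assms[of 0] by simp
next
  case (Suc m)
  have "(\<Sum>i=0..2*Suc m. f i) = (\<Sum>i=0..2*m. f i) + f (2*m+1) + f (2*m+2)"
    by (simp add: sum.atLeast0_atMost_Suc)
  also have "f (2*m+1) = 0" using assms by simp
  finally show ?case using Suc by (simp add: sum.cl_ivl_Suc)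
qed

lemma complex_coeff:
  assumes n2: "n \<ge> 2" and m1: "m \<ge> 1"
  shows "complex_of_real (\<Sum>k = 1..n-1. cot (real k * pi / real n) ^ (2*m))
    = complex_of_real ((-1) ^ m * (real n - 1) - 2 * real m *
        (\<Sum>k=1..m. (-4) ^ k * fps_nth Gr (2*k) * (real n ^ (2*k) - 1) / (2 * real k) * fps_nth (Tr ^ (2*k)) (2*m)))"
proof -
  have e: "fps_nth (\<Sum>k\<in>{1..n-1}. Geo (cc n k)) (2*m)
      = fps_nth (of_nat (n - 1) * fps_deriv Tc - fps_X * fps_deriv (Lam n oo Tc)) (2*m)"
    by (simp only: complex_main[OF n2])
  have L: "fps_nth (\<Sum>k\<in>{1..n-1}. Geo (cc n k)) (2*m) = complex_of_real (\<Sum>k = 1..n-1. cot (real k * pi / real n) ^ (2*m))"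
    by (simp add: fps_sum_nth Geo_def cc_def)
  have Lam_nth: "fps_nth (Lam n oo Tc) (2*m) =
     (\<Sum>k=1..m. fps_nth (Lam n) (2*k) * fps_nth (Tc ^ (2*k)) (2*m))"
    unfolding fps_compose_nth by (rule sum_even_reindex) (auto simp: Lam_def)
  have trm: "fps_nth (Lam n) (2*k) * fps_nth (Tc ^ (2*k)) (2*m) = complex_of_real
     ((-4) ^ k * fps_nth Gr (2*k) * (real n ^ (2*k) - 1) / (2 * real k) * fps_nth (Tr ^ (2*k)) (2*m))"
    if "k \<in> {1..m}" for k
  proof -
    have "(2 * \<i>) ^ (2 * k) = (-4 :: complex) ^ k"
      by (simp add: power_mult power_mult_distrib)
    then show ?thesis using that
      by (simp add: Lam_def Gc_def Tc_def cfps_power[symmetric])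
  qed
  have R: "fps_nth (of_nat (n - 1) * fps_deriv Tc - fps_X * fps_deriv (Lam n oo Tc)) (2*m)
     = of_nat (n - 1) * (-1) ^ m - of_nat (2*m) * fps_nth (Lam n oo Tc) (2*m)"
  proof -
    have "fps_nth (of_nat (n - 1) * fps_deriv Tc) (2*m) = of_nat (n - 1) * (-1) ^ m"
    proof -
      have d: "fps_nth (fps_deriv Tc) (2*m) = (-1)^m" using Tc_deriv_nth[of "2*m"] by simp
      show ?thesis by (simp add: fps_of_nat[symmetric] d del: fps_deriv_nth)
    qed
    moreover have "fps_nth (fps_X * fps_deriv (Lam n oo Tc)) (2*m) = of_nat (2*m) * fps_nth (Lam n oo Tc) (2*m)"
      using m1 by (cases m) (simp_all del: of_nat_Suc)
    ultimately show ?thesis by simp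
  qed
  have on: "complex_of_nat (n - 1) = of_nat n - 1" using n2 by (simp add: of_nat_diff)
  show ?thesis
    using e unfolding L R Lam_nth on
    by (simp add: trm of_nat_diff n2 sum.cong[OF refl trm])
qed


theorem corollary6p8:
  fixes m n :: nat
  assumes "m \<ge> 1" and "n \<ge> 2"
  shows "(\<Sum>k = 1..n-1. cot (real k * pi / real n) ^ (2*m))
       = (-1) ^ m * (real n - 1)
         - 1 / fact (2*m - 1) *
           (\<Sum>k = 1..m. (-1) ^ k * arctan_num (2*m) (2*k)
              * (4 ^ k * bernoulli_num (2*k) / (2 * real k)) * (real n ^ (2*k) - 1))"
proof -
  define W where "W = (\<Sum>k=1..m. (-4) ^ k * fps_nth Gr (2*k) * (real n ^ (2*k) - 1) / (2 * real k) * fps_nth (Tr ^ (2*k)) (2*m))"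
  have real_eq: "(\<Sum>k = 1..n-1. cot (real k * pi / real n) ^ (2*m)) = (-1) ^ m * (real n - 1) - 2 * real m * W"
    using complex_coeff[OF assms(2) assms(1)] unfolding W_def of_real_eq_iff .
  have f2m: "(fact (2*m) :: real) = 2 * real m * fact (2*m - 1)"
    using assms(1) by (simp add: fact_reduce[of "2*m"])
  have trm: "(-1) ^ k * arctan_num (2*m) (2*k) * (4 ^ k * bernoulli_num (2*k) / (2 * real k)) * (real n ^ (2*k) - 1)
      = fact (2*m - 1) * (2 * real m * ((-4) ^ k * fps_nth Gr (2*k) * (real n ^ (2*k) - 1) / (2 * real k) * fps_nth (Tr ^ (2*k)) (2*m)))"
    for k
  proof -
    have p4: "(-4::real) ^ k = (-1) ^ k * 4 ^ k" by (simp flip: power_mult_distrib)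
    show ?thesis unfolding arctan_num_fps bernoulli_Gr p4 f2m by simp
  qed
  have "(\<Sum>k = 1..m. (-1) ^ k * arctan_num (2*m) (2*k)
              * (4 ^ k * bernoulli_num (2*k) / (2 * real k)) * (real n ^ (2*k) - 1))
      = fact (2*m - 1) * (2 * real m * W)"
    unfolding W_def trm by (simp add: sum_distrib_left)
  then show ?thesis unfolding real_eq by simp
qed


end
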